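(* Let $\mathrm{Re}\,z<-1$, $C,C'\ge0$, and $\delta,\gamma\ge0$ with $\frac12\le\gamma+\delta\le1$. Then for every $\Psi\in\mathscr H$: $$\int\omega^{(\mathrm a)}(q)[\omega^{(\mathrm a)}(q)+|\mathrm{Re}\,z|]^{2(\delta+\gamma)-1}\big\|R_0(z-\omega^{(\mathrm a)}(q)-C)^\delta\mathbf a(q)R_0(z-C')^\gamma\Psi\big\|^2dq\le\|\Psi\|^2,$$ $$\int\omega^{(\mathrm b)}(k)[\omega^{(\mathrm b)}(k)+|\mathrm{Re}\,z|]^{2(\delta+\gamma)-1}\big\|R_0(z-\omega^{(\mathrm b)}(k)-C)^\delta\mathbf b(k)R_0(z-C')^\gamma\Psi\big\|^2dk\le\|\Psi\|^2.$$
   Context: Setting: $\mathscr H=\mathscr F_{\mathrm s}(L^2(\mathbb R^d))\otimes\mathscr F_{\mathrm a}(L^2(\mathbb R^d))$ with bosonic operators $\mathbf a(q),\mathbf a^*(q)$ (CCR) on the first factor and fermionic operators $\mathbf b(k),\mathbf b^*(k)$ (CAR) on the second, mutually commuting; $m_{\mathrm b},m_{\mathrm f}>0$, $\omega^{(\mathrm a)}(q)=\sqrt{|q|^2+m_{\mathrm b}^2}$, $\omega^{(\mathrm b)}(k)=\sqrt{|k|^2+m_{\mathrm f}^2}$, $H_0=\int\omega^{(\mathrm b)}(k)\mathbf b^*(k)\mathbf b(k)\,dk+\int\omega^{(\mathrm a)}(q)\mathbf a^*(q)\mathbf a(q)\,dq$. For $\mathrm{Re}\,w<0$, $R_0(w)=(H_0-w)^{-1}$,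 with fractional powers by functional calculus. *)

theory Defs
  imports "HOL-Analysis.Analysis"
begin

text \<open>Concrete realisation of
  F_s(L^2(R^d)) (x) F_a(L^2(R^d)) = direct sum over (n,m) of
  L^2_{sym in n bosons, antisym in m fermions}((R^d)^n x (R^d)^m).
  A configuration in sector (n,m) is a pair (x,y) of functions
  x : nat => R^d (extensional on {..<n}), y : nat => R^d (extensional on {..<m}).\<close>

type_synonym 'd config = "(nat \<Rightarrow> real^'d) \<times> (nat \<Rightarrow> real^'d)"
type_synonym 'd fock = "nat \<Rightarrow> nat \<Rightarrow> 'd config \<Rightarrow> complex"

definition fock_meas :: "nat \<Rightarrow> nat \<Rightarrow> 'd::finite config measure" where
  "fock_meas n m = (PiM {..<n} (\<lambda>_. lborel)) \<Otimes>\<^sub>M (PiM {..<m} (\<lambda>_. lborel))"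

definition omega :: "real \<Rightarrow> real^'d::finite \<Rightarrow> real" where
  "omega mass p = sqrt ((norm p)^2 + mass^2)"

definition fock_norm2 :: "'d::finite fock \<Rightarrow> ennreal" where
  "fock_norm2 Psi = (\<Sum>n. \<Sum>m. \<integral>\<^sup>+ c. ennreal ((cmod (Psi n m c))^2) \<partial>fock_meas n m)"

definition fock_vector :: "'d::finite fock \<Rightarrow> bool" where
  "fock_vector Psi \<longleftrightarrow>
     (\<forall>n m. Psi n m \<in> borel_measurable (fock_meas n m)) \<and>
     (\<forall>n m x y \<sigma>. (x, y) \<in> space (fock_meas n m) \<longrightarrow> \<sigma> permutes {..<n} \<longrightarrow>
         Psi n m (x \<circ> \<sigma>, y) = Psi n m (x, y)) \<and>
     (\<forall>n m x y \<sigma>. (x, y) \<in> space (fock_meas n m) \<longrightarrow> \<sigma> permutes {..<m} \<longrightarrow>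
         Psi n m (x, y \<circ> \<sigma>) = of_int (sign \<sigma>) * Psi n m (x, y)) \<and>
     fock_norm2 Psi < \<infinity>"

definition energy :: "real \<Rightarrow> real \<Rightarrow> nat \<Rightarrow> nat \<Rightarrow> 'd::finite config \<Rightarrow> real" where
  "energy mb mf n m c = (\<Sum>i<n. omega mb (fst c i)) + (\<Sum>j<m. omega mf (snd c j))"

text \<open>R_0(w)^s = (H_0 - w)^(-s) via functional calculus (principal branch),
  acting as a multiplication operator\<close>
definition res_pow :: "real \<Rightarrow> real \<Rightarrow> complex \<Rightarrow> real \<Rightarrow> 'd::finite fock \<Rightarrow> 'd fock" where
  "res_pow mb mf w s Phi = (\<lambda>n m c.
      (complex_of_real (energy mb mf n m c) - w) powr (complex_of_real (- s)) * Phi n m c)"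

definition ins :: "nat \<Rightarrow> real^'d::finite \<Rightarrow> (nat \<Rightarrow> real^'d) \<Rightarrow> nat \<Rightarrow> real^'d" where
  "ins n q x = (\<lambda>i. if i = 0 then q else if i \<le> n then x (i - 1) else undefined)"

definition ann_a :: "'d::finite fock \<Rightarrow> real^'d \<Rightarrow> 'd fock" where
  "ann_a Phi q = (\<lambda>n m c. complex_of_real (sqrt (real (n + 1))) * Phi (n + 1) m (ins n q (fst c), snd c))"

definition ann_b :: "'d::finite fock \<Rightarrow> real^'d \<Rightarrow> 'd fock" where
  "ann_b Phi k = (\<lambda>n m c. complex_of_real (sqrt (real (m + 1))) * Phi n (m + 1) (fst c, ins m k (snd c)))"

end

theory Submission
  imports Defs
begin


lemma PiM_perm_distr:
  fixes M :: "'a measure"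
  assumes sf: "sigma_finite_measure M" and fin: "finite I" and p: "\<sigma> permutes I"
  shows "distr (PiM I (\<lambda>_. M)) (PiM I (\<lambda>_. M)) (\<lambda>x. x \<circ> \<sigma>) = PiM I (\<lambda>_. M)"
proof -
  interpret product_sigma_finite "\<lambda>_. M" unfolding product_sigma_finite_def using sf by simp
  have meas: "(\<lambda>x. x \<circ> \<sigma>) \<in> measurable (PiM I (\<lambda>_. M)) (PiM I (\<lambda>_. M))"
  proof -
    have "(\<lambda>x i. x (\<sigma> i)) \<in> measurable (PiM I (\<lambda>_. M)) (PiM I (\<lambda>_. M))"
    proof (rule measurable_PiM_single')
      fix i assume "i \<in> I"
      then have "\<sigma> i \<in> I" using p by (simp add: permutes_in_image)
      then show "(\<lambda>x. x (\<sigma> i)) \<in> measurable (PiM I (\<lambda>_. M)) M"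
        by (rule measurable_component_singleton)
    next
      show "(\<lambda>x i. x (\<sigma> i)) \<in> space (PiM I (\<lambda>_. M)) \<rightarrow> (\<Pi>\<^sub>E i\<in>I. space M)"
        using p by (auto simp: space_PiM PiE_def extensional_def permutes_in_image Pi_iff
            permutes_not_in)
    qed
    then show ?thesis by (simp add: comp_def)
  qed
  show ?thesis
  proof (rule PiM_eqI[OF fin])
    show "sets (distr (PiM I (\<lambda>_. M)) (PiM I (\<lambda>_. M)) (\<lambda>x. x \<circ> \<sigma>)) = sets (PiM I (\<lambda>_. M))" by simp
  next
    fix A assume A: "\<And>i. i \<in> I \<Longrightarrow> A i \<in> sets M"
    have pre: "(\<lambda>x. x \<circ> \<sigma>) -` Pi\<^sub>E I A \<inter> space (PiM I (\<lambda>_. M)) = Pi\<^sub>E I (\<lambda>j. A (inv \<sigma> j))"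
    proof (intro set_eqI iffI)
      fix x assume x: "x \<in> (\<lambda>x. x \<circ> \<sigma>) -` Pi\<^sub>E I A \<inter> space (PiM I (\<lambda>_. M))"
      show "x \<in> Pi\<^sub>E I (\<lambda>j. A (inv \<sigma> j))"
      proof -
        have "\<And>j. j \<in> I \<Longrightarrow> x j \<in> A (inv \<sigma> j)"
        proof -
          fix j assume j: "j \<in> I"
          have "inv \<sigma> j \<in> I" using j p by (simp add: permutes_inv permutes_in_image)
          then have "x (\<sigma> (inv \<sigma> j)) \<in> A (inv \<sigma> j)" using x by (auto simp: PiE_def Pi_iff)
          then show "x j \<in> A (inv \<sigma> j)" using p by (simp add: permutes_inverses(1))
        qed
        then show ?thesis using x by (auto simp: space_PiM PiE_def)
      qed
    next
      fix x assume x: "x \<in> Pi\<^sub>E I (\<lambda>j. A (inv \<sigma> j))"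
      have sp: "x \<in> space (PiM I (\<lambda>_. M))"
        proof -
        have "\<And>j. j \<in> I \<Longrightarrow> x j \<in> space M"
        proof -
          fix j assume j: "j \<in> I"
          have "inv \<sigma> j \<in> I" using j p by (simp add: permutes_inv permutes_in_image)
          then have "A (inv \<sigma> j) \<subseteq> space M" using A sets.sets_into_space by blast
          then show "x j \<in> space M" using x j by (auto simp: PiE_def Pi_iff)
        qed
        then show ?thesis using x by (auto simp: space_PiM PiE_def)
      qed
      have "\<And>i. i \<in> I \<Longrightarrow> x (\<sigma> i) \<in> A i"
      proof -
        fix i assume i: "i \<in> I"
        then have "\<sigma> i \<in> I" using p by (simp add: permutes_in_image)
        then have "x (\<sigma> i) \<in> A (inv \<sigma> (\<sigma> i))" using x by (auto simp: PiE_def)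
        then show "x (\<sigma> i) \<in> A i" using p by (simp add: permutes_inverses(2))
      qed
      then have "x \<circ> \<sigma> \<in> Pi\<^sub>E I A"
        using x p by (auto simp: PiE_def Pi_iff extensional_def permutes_in_image permutes_not_in permutes_inverses(2))
      then show "x \<in> (\<lambda>x. x \<circ> \<sigma>) -` Pi\<^sub>E I A \<inter> space (PiM I (\<lambda>_. M))" using sp by simp
    qed
    have A': "\<And>j. j \<in> I \<Longrightarrow> A (inv \<sigma> j) \<in> sets M"
      using A p by (simp add: permutes_inv permutes_in_image)
    have "emeasure (distr (PiM I (\<lambda>_. M)) (PiM I (\<lambda>_. M)) (\<lambda>x. x \<circ> \<sigma>)) (Pi\<^sub>E I A)
        = emeasure (PiM I (\<lambda>_. M)) (Pi\<^sub>E I (\<lambda>j. A (inv \<sigma> j)))"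
      using A meas fin by (subst emeasure_distr) (auto simp: pre intro!: sets_PiM_I_finite)
    also have "\<dots> = (\<Prod>j\<in>I. emeasure M (A (inv \<sigma> j)))"
      using A' fin by (simp add: emeasure_PiM)
    also have "\<dots> = (\<Prod>i\<in>I. emeasure M (A i))"
      using prod.permute[OF permutes_inv[OF p], of "\<lambda>i. emeasure M (A i)"] by (simp add: comp_def)
    finally show "emeasure (distr (PiM I (\<lambda>_. M)) (PiM I (\<lambda>_. M)) (\<lambda>x. x \<circ> \<sigma>)) (Pi\<^sub>E I A) = (\<Prod>i\<in>I. emeasure M (A i))" .
  qed
qed

lemma perm_measurable:
  assumes p: "\<sigma> permutes I"
  shows "(\<lambda>x. x \<circ> \<sigma>) \<in> measurable (PiM I (\<lambda>_. M)) (PiM I (\<lambda>_. M))"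
proof -
  have "(\<lambda>x i. x (\<sigma> i)) \<in> measurable (PiM I (\<lambda>_. M)) (PiM I (\<lambda>_. M))"
  proof (rule measurable_PiM_single')
    fix i assume "i \<in> I"
    then have "\<sigma> i \<in> I" using p by (simp add: permutes_in_image)
    then show "(\<lambda>x. x (\<sigma> i)) \<in> measurable (PiM I (\<lambda>_. M)) M"
      by (rule measurable_component_singleton)
  next
    show "(\<lambda>x i. x (\<sigma> i)) \<in> space (PiM I (\<lambda>_. M)) \<rightarrow> (\<Pi>\<^sub>E i\<in>I. space M)"
      using p by (auto simp: space_PiM PiE_def extensional_def permutes_in_image Pi_iff
          permutes_not_in)
  qed
  then show ?thesis by (simp add: comp_def)
qed

lemma nn_integral_PiM_perm:
  fixes M :: "'a measure"
  assumes sf: "sigma_finite_measure M" and fin: "finite I" and p: "\<sigma> permutes I"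
    and f: "f \<in> borel_measurable (PiM I (\<lambda>_. M))"
  shows "(\<integral>\<^sup>+x. f (x \<circ> \<sigma>) \<partial>PiM I (\<lambda>_. M)) = (\<integral>\<^sup>+x. f x \<partial>PiM I (\<lambda>_. M))"
proof -
  have "(\<integral>\<^sup>+x. f x \<partial>PiM I (\<lambda>_. M)) = (\<integral>\<^sup>+x. f x \<partial>distr (PiM I (\<lambda>_. M)) (PiM I (\<lambda>_. M)) (\<lambda>x. x \<circ> \<sigma>))"
    using PiM_perm_distr[OF sf fin p] by simp
  also have "\<dots> = (\<integral>\<^sup>+x. f (x \<circ> \<sigma>) \<partial>PiM I (\<lambda>_. M))"
    by (rule nn_integral_distr[OF perm_measurable[OF p]]) (simp add: f)
  finally show ?thesis by simp
qed

lemma omega_meas[measurable]: "omega ms \<in> borel_measurable borel"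
  unfolding omega_def by measurable

lemma omega_nonneg: "omega ms p \<ge> 0"
  unfolding omega_def by simp

definition tau :: "nat \<Rightarrow> nat \<Rightarrow> nat" where
  "tau n i = (if i = 0 then n else if i \<le> n then i - 1 else i)"

lemma tau_permutes: "tau n permutes {..<Suc n}"
proof (rule bij_imp_permutes)
  show "bij_betw (tau n) {..<Suc n} {..<Suc n}"
    by (rule bij_betw_byWitness[where f'="\<lambda>i. if i = n then 0 else if i < n then i + 1 else i"])
       (auto simp: tau_def)
  show "\<And>x. x \<notin> {..<Suc n} \<Longrightarrow> tau n x = x" by (auto simp: tau_def)
qed

lemma ins_eq:
  assumes "x \<in> space (PiM {..<n} (\<lambda>_. M))"
  shows "ins n q x = x(n := q) \<circ> tau n"
  using assms by (auto simp: ins_def tau_def space_PiM PiE_def extensional_def fun_eq_iff)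

lemma upd_space:
  assumes "x \<in> space (PiM {..<n} (\<lambda>_. lborel))"
  shows "x(n := q) \<in> space (PiM {..<Suc n} (\<lambda>_. lborel))"
  using assms by (auto simp: space_PiM PiE_def extensional_def)



lemma omega_meas': "omega ms \<in> borel_measurable lborel"
  by simp

lemma core:
  fixes G :: "(nat \<Rightarrow> real^'d::finite) \<Rightarrow> real" and ms a E0 :: real and n :: nat
  assumes ms: "ms > 0" and a: "a > 0" and E0: "E0 \<ge> 0"
    and Gm: "G \<in> borel_measurable (PiM {..<Suc n} (\<lambda>_. lborel :: (real^'d) measure))"
    and Gp: "\<And>x. G x \<ge> 0"
    and Gs: "\<And>x \<sigma>. x \<in> space (PiM {..<Suc n} (\<lambda>_. lborel :: (real^'d) measure)) \<Longrightarrow> \<sigma> permutes {..<Suc n} \<Longrightarrow> G (x \<circ> \<sigma>) = G x"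
  shows "(\<integral>\<^sup>+q. \<integral>\<^sup>+x. ennreal (real (Suc n) * omega ms q / (omega ms q + (\<Sum>i<n. omega ms (x i)) + E0 + a) * G (ins n q x)) \<partial>PiM {..<n} (\<lambda>_. lborel :: (real^'d) measure) \<partial>lborel)
     \<le> (\<integral>\<^sup>+x. ennreal (G x) \<partial>PiM {..<Suc n} (\<lambda>_. lborel :: (real^'d) measure))"
proof -
  let ?Mn = "PiM {..<n} (\<lambda>_. lborel :: (real^'d) measure)"
  let ?MN = "PiM {..<Suc n} (\<lambda>_. lborel :: (real^'d) measure)"
  interpret P: product_sigma_finite "\<lambda>_. lborel :: (real^'d) measure"
    unfolding product_sigma_finite_def using sigma_finite_lborel by simp
  define S where "S x = (\<Sum>i<Suc n. omega ms (x i))" for x :: "nat \<Rightarrow> real^'d"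
  define k where "k j x = omega ms (x j) / (S x + E0 + a) * G x" for j and x :: "nat \<Rightarrow> real^'d"
  have S0: "S x \<ge> 0" for x unfolding S_def by (intro sum_nonneg) (simp add: omega_nonneg)
  have k0: "k j x \<ge> 0" for j x
    unfolding k_def using S0[of x] E0 a Gp[of x] by (intro mult_nonneg_nonneg divide_nonneg_pos) (auto simp: omega_nonneg)
  have comp: "(\<lambda>x. omega ms (x i)) \<in> borel_measurable ?MN" if "i < Suc n" for i
  proof -
    have "(\<lambda>x. x i) \<in> measurable ?MN lborel"
      using that by (intro measurable_component_singleton) auto
    from measurable_compose[OF this omega_meas'] show ?thesis .
  qed
  have Sm: "S \<in> borel_measurable ?MN"
  proof -
    have "(\<lambda>x. \<Sum>i<Suc n. omega ms (x i)) \<in> borel_measurable ?MN"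
      by (rule borel_measurable_sum) (use comp in auto)
    then show ?thesis unfolding S_def[abs_def] .
  qed
  have km: "(\<lambda>x. ennreal (k j x)) \<in> borel_measurable ?MN" if "j < Suc n" for j
  proof -
    note [measurable] = comp[OF that] Sm Gm
    show ?thesis unfolding k_def by measurable
  qed
  define hN where "hN x = ennreal (real (Suc n) * k n x)" for x
  have hNm: "hN \<in> borel_measurable ?MN"
  proof -
    note [measurable] = comp[of n] Sm Gm
    show ?thesis unfolding hN_def k_def by measurable
  qed
  have stepA: "(\<integral>\<^sup>+q. \<integral>\<^sup>+x. ennreal (real (Suc n) * omega ms q / (omega ms q + (\<Sum>i<n. omega ms (x i)) + E0 + a) * G (ins n q x)) \<partial>?Mn \<partial>lborel)
      = (\<integral>\<^sup>+q. \<integral>\<^sup>+x. hN (x(n := q)) \<partial>?Mn \<partial>lborel)"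
  proof (intro nn_integral_cong)
    fix q x assume x: "x \<in> space ?Mn"
    have G: "G (ins n q x) = G (x(n := q))"
      using ins_eq[OF x] Gs[OF upd_space[OF x] tau_permutes] by simp
    have Sx: "S (x(n := q)) = omega ms q + (\<Sum>i<n. omega ms (x i))"
      unfolding S_def by (simp add: lessThan_Suc_eq_insert_0 sum.atLeast0_lessThan_Suc[symmetric] lessThan_atLeast0)
    show "ennreal (real (Suc n) * omega ms q / (omega ms q + (\<Sum>i<n. omega ms (x i)) + E0 + a) * G (ins n q x)) = hN (x(n := q))"
      unfolding hN_def k_def G Sx by (simp add: mult.assoc)
  qed
  have stepB: "(\<integral>\<^sup>+q. \<integral>\<^sup>+x. hN (x(n := q)) \<partial>?Mn \<partial>lborel) = (\<integral>\<^sup>+x. hN x \<partial>?MN)"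
    using P.product_nn_integral_insert_rev[of "{..<n}" n hN] hNm by (simp add: lessThan_Suc)
  have perm: "(\<integral>\<^sup>+x. ennreal (k j x) \<partial>?MN) = (\<integral>\<^sup>+x. ennreal (k n x) \<partial>?MN)" if j: "j < Suc n" for j
  proof -
    let ?s = "Transposition.transpose j n"
    have sp: "?s permutes {..<Suc n}" using j by (intro permutes_swap_id) auto
    have "(\<integral>\<^sup>+x. ennreal (k n x) \<partial>?MN) = (\<integral>\<^sup>+x. ennreal (k n (x \<circ> ?s)) \<partial>?MN)"
      by (rule nn_integral_PiM_perm[OF sigma_finite_lborel _ sp, symmetric]) (use km[of n] in auto)
    also have "\<dots> = (\<integral>\<^sup>+x. ennreal (k j x) \<partial>?MN)"
    proof (intro nn_integral_cong)
      fix x assume x: "x \<in> space ?MN"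
      have "S (x \<circ> ?s) = S x" unfolding S_def
        using sum.permute[OF sp, of "\<lambda>i. omega ms (x i)"] by (simp add: comp_def)
      then show "ennreal (k n (x \<circ> ?s)) = ennreal (k j x)"
        unfolding k_def using Gs[OF x sp] by (simp add: transpose_def)
    qed
    finally show ?thesis by simp
  qed
  have stepC: "(\<integral>\<^sup>+x. hN x \<partial>?MN) = (\<integral>\<^sup>+x. (\<Sum>j<Suc n. ennreal (k j x)) \<partial>?MN)"
  proof -
    have "(\<integral>\<^sup>+x. hN x \<partial>?MN) = (\<integral>\<^sup>+x. of_nat (Suc n) * ennreal (k n x) \<partial>?MN)"
      unfolding hN_def using k0 by (intro nn_integral_cong) (simp add: ennreal_mult ennreal_of_nat_eq_real_of_nat)
    also have "\<dots> = of_nat (Suc n) * (\<integral>\<^sup>+x. ennreal (k n x) \<partial>?MN)"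
      by (rule nn_integral_cmult) (use km[of n] in auto)
    also have "\<dots> = (\<Sum>j<Suc n. (\<integral>\<^sup>+x. ennreal (k n x) \<partial>?MN))"
      by (simp add: sum_constant)
    also have "\<dots> = (\<Sum>j<Suc n. (\<integral>\<^sup>+x. ennreal (k j x) \<partial>?MN))"
      by (intro sum.cong refl perm[symmetric]) simp
    also have "\<dots> = (\<integral>\<^sup>+x. (\<Sum>j<Suc n. ennreal (k j x)) \<partial>?MN)"
      by (rule nn_integral_sum[symmetric]) (use km in auto)
    finally show ?thesis .
  qed
  have stepD: "(\<integral>\<^sup>+x. (\<Sum>j<Suc n. ennreal (k j x)) \<partial>?MN) \<le> (\<integral>\<^sup>+x. ennreal (G x) \<partial>?MN)"
  proof (intro nn_integral_mono)
    fix x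
    have "(\<Sum>j<Suc n. ennreal (k j x)) = ennreal (\<Sum>j<Suc n. k j x)"
      by (rule sum_ennreal) (rule k0)
    also have "(\<Sum>j<Suc n. k j x) = S x / (S x + E0 + a) * G x"
    proof -
      have "(\<Sum>j<Suc n. k j x) = (\<Sum>j<Suc n. omega ms (x j)) / (S x + E0 + a) * G x"
        unfolding k_def by (simp only: sum_distrib_right[symmetric] sum_divide_distrib[symmetric])
      then show ?thesis by (simp only: S_def)
    qed
    also have "\<dots> \<le> G x"
    proof -
      have "S x / (S x + E0 + a) \<le> 1" using S0[of x] E0 a by simp
      from mult_right_mono[OF this Gp[of x]] show ?thesis by simp
    qed
    finally show "(\<Sum>j<Suc n. ennreal (k j x)) \<le> ennreal (G x)" by (simp add: ennreal_leI)
  qed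
  show ?thesis unfolding stepA stepB stepC by (rule stepD)
qed


lemma pw:
  fixes z :: complex and E0 w0 C C' \<delta> \<gamma> :: real and P :: complex and N :: nat
  assumes E0: "E0 \<ge> 0" and w0: "w0 > 0" and z: "Re z < -1" and C: "C \<ge> 0" and C': "C' \<ge> 0"
    and d: "\<delta> \<ge> 0" and g: "\<gamma> \<ge> 0" and s1: "1/2 \<le> \<gamma> + \<delta>" and s2: "\<gamma> + \<delta> \<le> 1"
  shows "w0 * (w0 + \<bar>Re z\<bar>) powr (2 * (\<delta> + \<gamma>) - 1) *
     (cmod ((complex_of_real E0 - (z - complex_of_real w0 - complex_of_real C)) powr complex_of_real (- \<delta>) *
       (complex_of_real (sqrt (real (N + 1))) *
        ((complex_of_real (w0 + E0) - (z - complex_of_real C')) powr complex_of_real (- \<gamma>) * P))))\<^sup>2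
    \<le> real (Suc N) * w0 / (w0 + E0 + \<bar>Re z\<bar>) * (cmod P)\<^sup>2"
proof -
  define a where "a = \<bar>Re z\<bar>"
  have a1: "a > 1" and aRe: "Re z = - a" using z by (auto simp: a_def)
  define D where "D = w0 + E0 + a"
  have D0: "D > 0" using E0 w0 a1 by (simp add: D_def)
  define u1 where "u1 = complex_of_real E0 - (z - complex_of_real w0 - complex_of_real C)"
  define u2 where "u2 = complex_of_real (w0 + E0) - (z - complex_of_real C')"
  have "Re u1 = E0 + a + w0 + C" by (simp add: u1_def aRe)
  then have u1D: "D \<le> cmod u1" using complex_Re_le_cmod[of u1] C by (simp add: D_def)
  have "Re u2 = w0 + E0 + a + C'" by (simp add: u2_def aRe)
  then have u2D: "D \<le> cmod u2" using complex_Re_le_cmod[of u2] C' by (simp add: D_def)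
  have n1: "cmod (u1 powr complex_of_real (- \<delta>)) = cmod u1 powr (- \<delta>)"
    by (subst norm_powr_real_powr') auto
  have n2: "cmod (u2 powr complex_of_real (- \<gamma>)) = cmod u2 powr (- \<gamma>)"
    by (subst norm_powr_real_powr') auto
  have b1: "cmod u1 powr (- \<delta>) \<le> D powr (- \<delta>)" using d D0 u1D by (intro powr_mono2') auto
  have b2: "cmod u2 powr (- \<gamma>) \<le> D powr (- \<gamma>)" using g D0 u2D by (intro powr_mono2') auto
  have b3: "(w0 + a) powr (2 * (\<delta> + \<gamma>) - 1) \<le> D powr (2 * (\<delta> + \<gamma>) - 1)"
    using s1 w0 a1 E0 by (intro powr_mono2) (auto simp: D_def)
  have sq: "(sqrt (real (N + 1)))\<^sup>2 = real (Suc N)" by simp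
  have "(cmod (u1 powr complex_of_real (- \<delta>) * (complex_of_real (sqrt (real (N + 1))) * (u2 powr complex_of_real (- \<gamma>) * P))))\<^sup>2
      = (cmod u1 powr (- \<delta>))\<^sup>2 * real (Suc N) * (cmod u2 powr (- \<gamma>))\<^sup>2 * (cmod P)\<^sup>2"
    unfolding norm_mult n1 n2 by (simp add: power_mult_distrib)
  also have "\<dots> \<le> (D powr (- \<delta>))\<^sup>2 * real (Suc N) * (D powr (- \<gamma>))\<^sup>2 * (cmod P)\<^sup>2"
    using b1 b2 by (intro mult_right_mono mult_mono power_mono) auto
  finally have X: "(cmod (u1 powr complex_of_real (- \<delta>) * (complex_of_real (sqrt (real (N + 1))) * (u2 powr complex_of_real (- \<gamma>) * P))))\<^sup>2
      \<le> (D powr (- \<delta>))\<^sup>2 * real (Suc N) * (D powr (- \<gamma>))\<^sup>2 * (cmod P)\<^sup>2" .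
  have "w0 * (w0 + a) powr (2 * (\<delta> + \<gamma>) - 1) * (cmod (u1 powr complex_of_real (- \<delta>) * (complex_of_real (sqrt (real (N + 1))) * (u2 powr complex_of_real (- \<gamma>) * P))))\<^sup>2
      \<le> w0 * D powr (2 * (\<delta> + \<gamma>) - 1) * ((D powr (- \<delta>))\<^sup>2 * real (Suc N) * (D powr (- \<gamma>))\<^sup>2 * (cmod P)\<^sup>2)"
    using X b3 w0 by (intro mult_mono mult_left_mono) auto
  also have "D powr (2 * (\<delta> + \<gamma>) - 1) * (D powr (- \<delta>))\<^sup>2 * (D powr (- \<gamma>))\<^sup>2 = D powr (-1)"
  proof -
    have "D powr (2 * (\<delta> + \<gamma>) - 1) * (D powr (- \<delta>))\<^sup>2 * (D powr (- \<gamma>))\<^sup>2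
        = D powr ((2 * (\<delta> + \<gamma>) - 1) + (- \<delta>) + (- \<delta>) + (- \<gamma>) + (- \<gamma>))"
      by (simp only: powr_add power2_eq_square mult.assoc)
    also have "(2 * (\<delta> + \<gamma>) - 1) + (- \<delta>) + (- \<delta>) + (- \<gamma>) + (- \<gamma>) = -1" by simp
    finally show ?thesis .
  qed
  then have "w0 * D powr (2 * (\<delta> + \<gamma>) - 1) * ((D powr (- \<delta>))\<^sup>2 * real (Suc N) * (D powr (- \<gamma>))\<^sup>2 * (cmod P)\<^sup>2)
      = real (Suc N) * w0 / D * (cmod P)\<^sup>2"
    using D0 by (simp add: powr_minus_divide mult_ac)
  finally show ?thesis unfolding a_def D_def u1_def u2_def .
qed

lemma ins_measurable:
  fixes f0 :: "'b \<Rightarrow> real^'d::finite"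
  assumes f0: "f0 \<in> measurable N lborel" and g: "\<And>i. i < n \<Longrightarrow> (\<lambda>p. g p i) \<in> measurable N lborel"
  shows "(\<lambda>p. ins n (f0 p) (g p)) \<in> measurable N (PiM {..<Suc n} (\<lambda>_. lborel :: (real^'d) measure))"
proof -
  have "(\<lambda>p i. (\<lambda>i p. ins n (f0 p) (g p) i) i p) \<in> measurable N (PiM {..<Suc n} (\<lambda>_. lborel :: (real^'d) measure))"
  proof (rule measurable_PiM_single'[where f="\<lambda>i p. ins n (f0 p) (g p) i"])
    fix i assume i: "i \<in> {..<Suc n}"
    show "(\<lambda>p. ins n (f0 p) (g p) i) \<in> measurable N lborel"
    proof (cases "i = 0")
      case True then show ?thesis using f0 by (simp add: ins_def)
    next
      case False
      then have "(\<lambda>p. ins n (f0 p) (g p) i) = (\<lambda>p. g p (i - 1))" using i by (auto simp: ins_def)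
      then show ?thesis using g[of "i - 1"] i False by simp
    qed
  next
    show "(\<lambda>p i. ins n (f0 p) (g p) i) \<in> space N \<rightarrow> (\<Pi>\<^sub>E i\<in>{..<Suc n}. space lborel)"
      by (auto simp: ins_def PiE_def extensional_def)
  qed
  then show ?thesis by simp
qed

lemma energy_ins_a: "energy mb mf (n + 1) m (ins n q x, y) = omega mb q + energy mb mf n m (x, y)"
proof -
  have "(\<Sum>i<Suc n. omega mb (ins n q x i)) = omega mb q + (\<Sum>i<n. omega mb (x i))"
    by (subst sum.lessThan_Suc_shift) (auto simp: ins_def intro!: sum.cong)
  then show ?thesis unfolding energy_def by simp
qed

lemma energy_ins_b: "energy mb mf n (m + 1) (x, ins m k y) = omega mf k + energy mb mf n m (x, y)"
proof -
  have "(\<Sum>i<Suc m. omega mf (ins m k y i)) = omega mf k + (\<Sum>i<m. omega mf (y i))"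
    by (subst sum.lessThan_Suc_shift) (auto simp: ins_def intro!: sum.cong)
  then show ?thesis unfolding energy_def by simp
qed

lemma comb_meas:
  fixes u v1 v2 :: "'b \<Rightarrow> real" and w :: "'b \<Rightarrow> complex"
  assumes [measurable]: "u \<in> borel_measurable L" "v1 \<in> borel_measurable L" "v2 \<in> borel_measurable L" "w \<in> borel_measurable L"
  shows "(\<lambda>p. c * u p / (u p + v1 p + v2 p + a) * (cmod (w p))\<^sup>2) \<in> borel_measurable L"
  by measurable

lemma sfPi: "sigma_finite_measure (PiM {..<n::nat} (\<lambda>_. lborel :: (real^'d::finite) measure))"
proof -
  interpret P: product_sigma_finite "\<lambda>_::nat. lborel :: (real^'d) measure"
    unfolding product_sigma_finite_def using sigma_finite_lborel by simp
  show ?thesis using P.sigma_finite[of "{..<n}"] by simp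
qed

lemma psf: "pair_sigma_finite (PiM {..<n::nat} (\<lambda>_. lborel :: (real^'d::finite) measure)) (PiM {..<m::nat} (\<lambda>_. lborel :: (real^'d::finite) measure))"
  unfolding pair_sigma_finite_def by (intro conjI sfPi)

lemma sf_fock: "sigma_finite_measure (fock_meas n m :: 'd::finite config measure)"
proof -
  interpret pair_sigma_finite "PiM {..<n} (\<lambda>_. lborel :: (real^'d) measure)" "PiM {..<m} (\<lambda>_. lborel :: (real^'d) measure)"
    by (rule psf)
  show ?thesis unfolding fock_meas_def by (rule P.sigma_finite_measure_axioms)
qed

lemma comp_meas:
  assumes "i < (n::nat)"
  shows "(\<lambda>x. omega ms (x i)) \<in> borel_measurable (PiM {..<n} (\<lambda>_. lborel :: (real^'d::finite) measure))"
proof -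
  have "(\<lambda>x. x i) \<in> measurable (PiM {..<n} (\<lambda>_. lborel :: (real^'d) measure)) lborel"
    using assms by (intro measurable_component_singleton) auto
  from measurable_compose[OF this omega_meas'] show ?thesis .
qed

lemma sum_meas:
  assumes "h \<in> measurable L (PiM {..<n::nat} (\<lambda>_. lborel :: (real^'d::finite) measure))"
  shows "(\<lambda>p. \<Sum>i<n. omega ms (h p i)) \<in> borel_measurable L"
proof (rule borel_measurable_sum)
  fix i assume "i \<in> {..<n}"
  then show "(\<lambda>p. omega ms (h p i)) \<in> borel_measurable L"
    using measurable_compose[OF assms comp_meas[of i n ms]] by simp
qed

lemma cpt_meas:
  assumes "h \<in> measurable L (PiM {..<n::nat} (\<lambda>_. lborel :: (real^'d::finite) measure))" "i < n"
  shows "(\<lambda>p. h p i) \<in> measurable L (lborel :: (real^'d) measure)"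
proof -
  have "(\<lambda>x. x i) \<in> measurable (PiM {..<n} (\<lambda>_. lborel :: (real^'d) measure)) lborel"
    using assms by (intro measurable_component_singleton) auto
  from measurable_compose[OF assms(1) this] show ?thesis .
qed

definition Bb :: "real \<Rightarrow> real \<Rightarrow> real \<Rightarrow> 'd::finite fock \<Rightarrow> nat \<Rightarrow> nat \<Rightarrow> real^'d \<Rightarrow> 'd config \<Rightarrow> real" where
  "Bb mb mf a Psi n m q c = real (Suc n) * omega mb q / (omega mb q + (\<Sum>i<n. omega mb (fst c i)) + (\<Sum>j<m. omega mf (snd c j)) + a)
     * (cmod (Psi (Suc n) m (ins n q (fst c), snd c)))\<^sup>2"

definition Bf :: "real \<Rightarrow> real \<Rightarrow> real \<Rightarrow> 'd::finite fock \<Rightarrow> nat \<Rightarrow> nat \<Rightarrow> real^'d \<Rightarrow> 'd config \<Rightarrow> real" where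
  "Bf mb mf a Psi n m k c = real (Suc m) * omega mf k / (omega mf k + (\<Sum>j<m. omega mf (snd c j)) + (\<Sum>i<n. omega mb (fst c i)) + a)
     * (cmod (Psi n (Suc m) (fst c, ins m k (snd c))))\<^sup>2"

lemma Bb_meas:
  fixes Psi :: "'d::finite fock"
  assumes Pm: "Psi (Suc n) m \<in> borel_measurable (fock_meas (Suc n) m)"
  shows "(\<lambda>p. Bb mb mf a Psi n m (fst p) (snd p)) \<in> borel_measurable (lborel \<Otimes>\<^sub>M fock_meas n m)"
proof -
  let ?L = "lborel \<Otimes>\<^sub>M fock_meas n m :: ((real^'d) \<times> 'd config) measure"
  have h1: "(\<lambda>p. fst (snd p)) \<in> measurable ?L (PiM {..<n} (\<lambda>_. lborel :: (real^'d) measure))"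
    unfolding fock_meas_def by measurable
  have h2: "(\<lambda>p. snd (snd p)) \<in> measurable ?L (PiM {..<m} (\<lambda>_. lborel :: (real^'d) measure))"
    unfolding fock_meas_def by measurable
  have q: "(\<lambda>p. omega mb (fst p)) \<in> borel_measurable ?L"
    using measurable_compose[OF measurable_fst omega_meas'] by simp
  have ins: "(\<lambda>p. ins n (fst p) (fst (snd p))) \<in> measurable ?L (PiM {..<Suc n} (\<lambda>_. lborel :: (real^'d) measure))"
    by (rule ins_measurable[OF measurable_fst]) (rule cpt_meas[OF h1])
  have pr: "(\<lambda>p. (ins n (fst p) (fst (snd p)), snd (snd p))) \<in> measurable ?L (fock_meas (Suc n) m)"
    unfolding fock_meas_def[of "Suc n" m] by (rule measurable_Pair[OF ins h2])
  have ps: "(\<lambda>p. Psi (Suc n) m (ins n (fst p) (fst (snd p)), snd (snd p))) \<in> borel_measurable ?L"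
    using measurable_compose[OF pr Pm] by simp
  show ?thesis unfolding Bb_def
    by (rule comb_meas[OF q sum_meas[OF h1] sum_meas[OF h2] ps])
qed

lemma Bf_meas:
  fixes Psi :: "'d::finite fock"
  assumes Pm: "Psi n (Suc m) \<in> borel_measurable (fock_meas n (Suc m))"
  shows "(\<lambda>p. Bf mb mf a Psi n m (fst p) (snd p)) \<in> borel_measurable (lborel \<Otimes>\<^sub>M fock_meas n m)"
proof -
  let ?L = "lborel \<Otimes>\<^sub>M fock_meas n m :: ((real^'d) \<times> 'd config) measure"
  have h1: "(\<lambda>p. fst (snd p)) \<in> measurable ?L (PiM {..<n} (\<lambda>_. lborel :: (real^'d) measure))"
    unfolding fock_meas_def by measurable
  have h2: "(\<lambda>p. snd (snd p)) \<in> measurable ?L (PiM {..<m} (\<lambda>_. lborel :: (real^'d) measure))"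
    unfolding fock_meas_def by measurable
  have q: "(\<lambda>p. omega mf (fst p)) \<in> borel_measurable ?L"
    using measurable_compose[OF measurable_fst omega_meas'] by simp
  have ins: "(\<lambda>p. ins m (fst p) (snd (snd p))) \<in> measurable ?L (PiM {..<Suc m} (\<lambda>_. lborel :: (real^'d) measure))"
    by (rule ins_measurable[OF measurable_fst]) (rule cpt_meas[OF h2])
  have pr: "(\<lambda>p. (fst (snd p), ins m (fst p) (snd (snd p)))) \<in> measurable ?L (fock_meas n (Suc m))"
    unfolding fock_meas_def[of n "Suc m"] by (rule measurable_Pair[OF h1 ins])
  have ps: "(\<lambda>p. Psi n (Suc m) (fst (snd p), ins m (fst p) (snd (snd p)))) \<in> borel_measurable ?L"
    using measurable_compose[OF pr Pm] by simp
  show ?thesis unfolding Bf_def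
    by (rule comb_meas[OF q sum_meas[OF h2] sum_meas[OF h1] ps])
qed



lemma cmod2_meas:
  fixes h :: "'b \<Rightarrow> complex"
  assumes h: "h \<in> borel_measurable M"
  shows "(\<lambda>x. ennreal ((cmod (h x))\<^sup>2)) \<in> borel_measurable M" "(\<lambda>x. (cmod (h x))\<^sup>2) \<in> borel_measurable M"
proof -
  have n: "(\<lambda>x. cmod (h x)) \<in> borel_measurable M" by (rule measurable_compose[OF h borel_measurable_norm])
  show 2: "(\<lambda>x. (cmod (h x))\<^sup>2) \<in> borel_measurable M" by (rule borel_measurable_power[OF n])
  show "(\<lambda>x. ennreal ((cmod (h x))\<^sup>2)) \<in> borel_measurable M" by (rule measurable_compose[OF 2 measurable_ennreal])
qed

lemma psf2: "pair_sigma_finite (PiM {..<n::nat} (\<lambda>_. lborel :: (real^'d::finite) measure)) (lborel :: (real^'d) measure)"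
  unfolding pair_sigma_finite_def by (intro conjI sfPi sigma_finite_lborel)

lemma psf3: "pair_sigma_finite (lborel :: (real^'d::finite) measure) (fock_meas n m :: 'd config measure)"
  unfolding pair_sigma_finite_def by (intro conjI sf_fock sigma_finite_lborel)

lemma boson_sector:
  fixes Psi :: "'d::finite fock" and mb mf a :: real and n m :: nat
  assumes a: "a > 0" and mb: "mb > 0"
    and Pm: "Psi (Suc n) m \<in> borel_measurable (fock_meas (Suc n) m)"
    and Ps: "\<And>x y \<sigma>. (x, y) \<in> space (fock_meas (Suc n) m) \<Longrightarrow> \<sigma> permutes {..<Suc n} \<Longrightarrow> Psi (Suc n) m (x \<circ> \<sigma>, y) = Psi (Suc n) m (x, y)"
  shows "(\<integral>\<^sup>+q. \<integral>\<^sup>+c. ennreal (Bb mb mf a Psi n m q c) \<partial>fock_meas n m \<partial>lborel)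
     \<le> (\<integral>\<^sup>+c. ennreal ((cmod (Psi (Suc n) m c))\<^sup>2) \<partial>fock_meas (Suc n) m)"
proof -
  let ?Mn = "PiM {..<n} (\<lambda>_. lborel :: (real^'d) measure)"
  let ?Mm = "PiM {..<m} (\<lambda>_. lborel :: (real^'d) measure)"
  let ?MN = "PiM {..<Suc n} (\<lambda>_. lborel :: (real^'d) measure)"
  define f where "f p = ennreal (Bb mb mf a Psi n m (fst p) (snd p))" for p :: "(real^'d) \<times> 'd config"
  have fm: "f \<in> borel_measurable (lborel \<Otimes>\<^sub>M fock_meas n m)"
    unfolding f_def by (rule measurable_compose[OF Bb_meas[where Psi=Psi and n=n and m=m and mb=mb and mf=mf and a=a, OF Pm] measurable_ennreal])
  interpret NM: pair_sigma_finite ?Mn ?Mm by (rule psf)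
  interpret NNM: pair_sigma_finite ?MN ?Mm by (rule psf)
  interpret LF: pair_sigma_finite "lborel :: (real^'d) measure" "fock_meas n m :: 'd config measure" by (rule psf3)
  define g where "g c = (\<integral>\<^sup>+q. f (q, c) \<partial>lborel)" for c
  have s1: "(\<integral>\<^sup>+q. \<integral>\<^sup>+c. ennreal (Bb mb mf a Psi n m q c) \<partial>fock_meas n m \<partial>lborel) = (\<integral>\<^sup>+c. g c \<partial>fock_meas n m)"
    using LF.Fubini[OF fm] by (simp add: f_def g_def)
  have gm: "g \<in> borel_measurable (fock_meas n m)"
    using lborel.borel_measurable_nn_integral_fst[OF measurable_pair_swap[OF fm]] unfolding g_def[abs_def] by simp
  have s2: "(\<integral>\<^sup>+c. g c \<partial>fock_meas n m) = (\<integral>\<^sup>+y. \<integral>\<^sup>+x. g (x, y) \<partial>?Mn \<partial>?Mm)"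
    using NM.nn_integral_snd[OF gm[unfolded fock_meas_def]] by (simp add: fock_meas_def)
  have s3: "(\<integral>\<^sup>+x. g (x, y) \<partial>?Mn) = (\<integral>\<^sup>+q. \<integral>\<^sup>+x. f (q, (x, y)) \<partial>?Mn \<partial>lborel)" if y: "y \<in> space ?Mm" for y
  proof -
    have mp: "(\<lambda>p. (snd p, (fst p, y))) \<in> measurable (?Mn \<Otimes>\<^sub>M lborel) (lborel \<Otimes>\<^sub>M fock_meas n m)"
      unfolding fock_meas_def[of n m]
      by (rule measurable_Pair[OF measurable_snd measurable_Pair[OF measurable_fst measurable_const[OF y]]])
    have hm: "(\<lambda>p. f (snd p, (fst p, y))) \<in> borel_measurable (?Mn \<Otimes>\<^sub>M lborel)"
      by (rule measurable_compose[OF mp fm])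
    show ?thesis
      using pair_sigma_finite.Fubini[OF psf2 hm] by (simp add: g_def)
  qed
  have s4: "(\<integral>\<^sup>+q. \<integral>\<^sup>+x. f (q, (x, y)) \<partial>?Mn \<partial>lborel) \<le> (\<integral>\<^sup>+x'. ennreal ((cmod (Psi (Suc n) m (x', y)))\<^sup>2) \<partial>?MN)"
    if y: "y \<in> space ?Mm" for y
  proof -
    have E0: "(\<Sum>j<m. omega mf (y j)) \<ge> 0" by (intro sum_nonneg) (simp add: omega_nonneg)
    have pm: "(\<lambda>x. Psi (Suc n) m (x, y)) \<in> borel_measurable ?MN"
      using measurable_compose[OF measurable_Pair2'[OF y] Pm[unfolded fock_meas_def]] by simp
    have Gs: "(cmod (Psi (Suc n) m (x \<circ> \<sigma>, y)))\<^sup>2 = (cmod (Psi (Suc n) m (x, y)))\<^sup>2"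
      if "x \<in> space ?MN" "\<sigma> permutes {..<Suc n}" for x \<sigma>
      using Ps[of x y \<sigma>] that y by (simp add: fock_meas_def space_pair_measure)
    have c: "(\<integral>\<^sup>+q. \<integral>\<^sup>+x. ennreal (real (Suc n) * omega mb q / (omega mb q + (\<Sum>i<n. omega mb (x i)) + (\<Sum>j<m. omega mf (y j)) + a) * (cmod (Psi (Suc n) m (ins n q x, y)))\<^sup>2) \<partial>?Mn \<partial>lborel)
       \<le> (\<integral>\<^sup>+x'. ennreal ((cmod (Psi (Suc n) m (x', y)))\<^sup>2) \<partial>?MN)"
      by (rule core[OF mb a E0 cmod2_meas(2)[OF pm] _ Gs]) simp_all
    then show ?thesis by (simp add: f_def Bb_def)
  qed
  have PmE: "(\<lambda>c. ennreal ((cmod (Psi (Suc n) m c))\<^sup>2)) \<in> borel_measurable (?MN \<Otimes>\<^sub>M ?Mm)"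
    using cmod2_meas(1)[OF Pm] by (simp add: fock_meas_def)
  have s5: "(\<integral>\<^sup>+y. \<integral>\<^sup>+x'. ennreal ((cmod (Psi (Suc n) m (x', y)))\<^sup>2) \<partial>?MN \<partial>?Mm) = (\<integral>\<^sup>+c. ennreal ((cmod (Psi (Suc n) m c))\<^sup>2) \<partial>fock_meas (Suc n) m)"
    using NNM.nn_integral_snd[OF PmE] by (simp add: fock_meas_def)
  have "(\<integral>\<^sup>+y. \<integral>\<^sup>+x. g (x, y) \<partial>?Mn \<partial>?Mm) = (\<integral>\<^sup>+y. \<integral>\<^sup>+q. \<integral>\<^sup>+x. f (q, (x, y)) \<partial>?Mn \<partial>lborel \<partial>?Mm)"
    by (rule nn_integral_cong) (rule s3)
  also have "\<dots> \<le> (\<integral>\<^sup>+y. \<integral>\<^sup>+x'. ennreal ((cmod (Psi (Suc n) m (x', y)))\<^sup>2) \<partial>?MN \<partial>?Mm)"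
    by (rule nn_integral_mono) (rule s4)
  finally have fin: "(\<integral>\<^sup>+y. \<integral>\<^sup>+x. g (x, y) \<partial>?Mn \<partial>?Mm) \<le> (\<integral>\<^sup>+y. \<integral>\<^sup>+x'. ennreal ((cmod (Psi (Suc n) m (x', y)))\<^sup>2) \<partial>?MN \<partial>?Mm)" .
  show ?thesis unfolding s1 s2 s5[symmetric] by (rule fin)
qed

lemma fermion_sector:
  fixes Psi :: "'d::finite fock" and mb mf a :: real and n m :: nat
  assumes a: "a > 0" and mf: "mf > 0"
    and Pm: "Psi n (Suc m) \<in> borel_measurable (fock_meas n (Suc m))"
    and Ps: "\<And>x y \<sigma>. (x, y) \<in> space (fock_meas n (Suc m)) \<Longrightarrow> \<sigma> permutes {..<Suc m} \<Longrightarrow> Psi n (Suc m) (x, y \<circ> \<sigma>) = of_int (sign \<sigma>) * Psi n (Suc m) (x, y)"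
  shows "(\<integral>\<^sup>+k. \<integral>\<^sup>+c. ennreal (Bf mb mf a Psi n m k c) \<partial>fock_meas n m \<partial>lborel)
     \<le> (\<integral>\<^sup>+c. ennreal ((cmod (Psi n (Suc m) c))\<^sup>2) \<partial>fock_meas n (Suc m))"
proof -
  let ?Mn = "PiM {..<n} (\<lambda>_. lborel :: (real^'d) measure)"
  let ?Mm = "PiM {..<m} (\<lambda>_. lborel :: (real^'d) measure)"
  let ?MM = "PiM {..<Suc m} (\<lambda>_. lborel :: (real^'d) measure)"
  define f where "f p = ennreal (Bf mb mf a Psi n m (fst p) (snd p))" for p :: "(real^'d) \<times> 'd config"
  have fm: "f \<in> borel_measurable (lborel \<Otimes>\<^sub>M fock_meas n m)"
    unfolding f_def by (rule measurable_compose[OF Bf_meas[where Psi=Psi and n=n and m=m and mb=mb and mf=mf and a=a, OF Pm] measurable_ennreal])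
  interpret LF: pair_sigma_finite "lborel :: (real^'d) measure" "fock_meas n m :: 'd config measure" by (rule psf3)
  define g where "g c = (\<integral>\<^sup>+q. f (q, c) \<partial>lborel)" for c
  have s1: "(\<integral>\<^sup>+q. \<integral>\<^sup>+c. ennreal (Bf mb mf a Psi n m q c) \<partial>fock_meas n m \<partial>lborel) = (\<integral>\<^sup>+c. g c \<partial>fock_meas n m)"
    using LF.Fubini[OF fm] by (simp add: f_def g_def)
  have gm: "g \<in> borel_measurable (fock_meas n m)"
    using lborel.borel_measurable_nn_integral_fst[OF measurable_pair_swap[OF fm]] unfolding g_def[abs_def] by simp
  have s2: "(\<integral>\<^sup>+c. g c \<partial>fock_meas n m) = (\<integral>\<^sup>+x. \<integral>\<^sup>+y. g (x, y) \<partial>?Mm \<partial>?Mn)"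
    using sigma_finite_measure.nn_integral_fst[OF sfPi gm[unfolded fock_meas_def]] by (simp add: fock_meas_def)
  have s3: "(\<integral>\<^sup>+y. g (x, y) \<partial>?Mm) = (\<integral>\<^sup>+q. \<integral>\<^sup>+y. f (q, (x, y)) \<partial>?Mm \<partial>lborel)" if x: "x \<in> space ?Mn" for x
  proof -
    have mp: "(\<lambda>p. (snd p, (x, fst p))) \<in> measurable (?Mm \<Otimes>\<^sub>M lborel) (lborel \<Otimes>\<^sub>M fock_meas n m)"
      unfolding fock_meas_def[of n m]
      by (rule measurable_Pair[OF measurable_snd measurable_Pair[OF measurable_const[OF x] measurable_fst]])
    have hm: "(\<lambda>p. f (snd p, (x, fst p))) \<in> borel_measurable (?Mm \<Otimes>\<^sub>M lborel)"
      by (rule measurable_compose[OF mp fm])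
    show ?thesis
      using pair_sigma_finite.Fubini[OF psf2 hm] by (simp add: g_def)
  qed
  have s4: "(\<integral>\<^sup>+q. \<integral>\<^sup>+y. f (q, (x, y)) \<partial>?Mm \<partial>lborel) \<le> (\<integral>\<^sup>+y'. ennreal ((cmod (Psi n (Suc m) (x, y')))\<^sup>2) \<partial>?MM)"
    if x: "x \<in> space ?Mn" for x
  proof -
    have E0: "(\<Sum>i<n. omega mb (x i)) \<ge> 0" by (intro sum_nonneg) (simp add: omega_nonneg)
    have pm: "(\<lambda>y. Psi n (Suc m) (x, y)) \<in> borel_measurable ?MM"
      using measurable_compose[OF measurable_Pair1'[OF x] Pm[unfolded fock_meas_def]] by simp
    have Gs: "(cmod (Psi n (Suc m) (x, y \<circ> \<sigma>)))\<^sup>2 = (cmod (Psi n (Suc m) (x, y)))\<^sup>2"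
      if "y \<in> space ?MM" "\<sigma> permutes {..<Suc m}" for y \<sigma>
      using Ps[of x y \<sigma>] that x by (simp add: fock_meas_def space_pair_measure norm_mult sign_def)
    have c: "(\<integral>\<^sup>+q. \<integral>\<^sup>+y. ennreal (real (Suc m) * omega mf q / (omega mf q + (\<Sum>j<m. omega mf (y j)) + (\<Sum>i<n. omega mb (x i)) + a) * (cmod (Psi n (Suc m) (x, ins m q y)))\<^sup>2) \<partial>?Mm \<partial>lborel)
       \<le> (\<integral>\<^sup>+y'. ennreal ((cmod (Psi n (Suc m) (x, y')))\<^sup>2) \<partial>?MM)"
      by (rule core[OF mf a E0 cmod2_meas(2)[OF pm] _ Gs]) simp_all
    then show ?thesis by (simp add: f_def Bf_def)
  qed
  have PmE: "(\<lambda>c. ennreal ((cmod (Psi n (Suc m) c))\<^sup>2)) \<in> borel_measurable (?Mn \<Otimes>\<^sub>M ?MM)"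
    using cmod2_meas(1)[OF Pm] by (simp add: fock_meas_def)
  have s5: "(\<integral>\<^sup>+x. \<integral>\<^sup>+y'. ennreal ((cmod (Psi n (Suc m) (x, y')))\<^sup>2) \<partial>?MM \<partial>?Mn) = (\<integral>\<^sup>+c. ennreal ((cmod (Psi n (Suc m) c))\<^sup>2) \<partial>fock_meas n (Suc m))"
    using sigma_finite_measure.nn_integral_fst[OF sfPi PmE] by (simp add: fock_meas_def)
  have "(\<integral>\<^sup>+x. \<integral>\<^sup>+y. g (x, y) \<partial>?Mm \<partial>?Mn) = (\<integral>\<^sup>+x. \<integral>\<^sup>+q. \<integral>\<^sup>+y. f (q, (x, y)) \<partial>?Mm \<partial>lborel \<partial>?Mn)"
    by (rule nn_integral_cong) (rule s3)
  also have "\<dots> \<le> (\<integral>\<^sup>+x. \<integral>\<^sup>+y'. ennreal ((cmod (Psi n (Suc m) (x, y')))\<^sup>2) \<partial>?MM \<partial>?Mn)"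
    by (rule nn_integral_mono) (rule s4)
  finally have fin: "(\<integral>\<^sup>+x. \<integral>\<^sup>+y. g (x, y) \<partial>?Mm \<partial>?Mn) \<le> (\<integral>\<^sup>+x. \<integral>\<^sup>+y'. ennreal ((cmod (Psi n (Suc m) (x, y')))\<^sup>2) \<partial>?MM \<partial>?Mn)" .
  show ?thesis unfolding s1 s2 s5[symmetric] by (rule fin)
qed



lemma suminf_shift_le:
  fixes f :: "nat \<Rightarrow> ennreal"
  shows "(\<Sum>n. f (Suc n)) \<le> (\<Sum>n. f n)"
proof (rule suminf_le_const)
  show "summable (\<lambda>n. f (Suc n))" by simp
  fix k
  have "(\<Sum>n<k. f (Suc n)) \<le> f 0 + (\<Sum>n<k. f (Suc n))" by (simp add: add_increasing)
  also have "\<dots> = (\<Sum>n<Suc k. f n)" by (rule sum.lessThan_Suc_shift[symmetric])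
  also have "\<dots> \<le> (\<Sum>n. f n)" by (rule sum_le_suminf) auto
  finally show "(\<Sum>n<k. f (Suc n)) \<le> (\<Sum>n. f n)" .
qed

lemma omega_pos: assumes "ms > 0" shows "omega ms q > 0"
proof -
  have "0 < (norm q)\<^sup>2 + ms\<^sup>2" using assms by (intro add_nonneg_pos) auto
  then show ?thesis unfolding omega_def by simp
qed

lemma B_meas_q:
  assumes "(\<lambda>p. B (fst p) (snd p)) \<in> borel_measurable (lborel \<Otimes>\<^sub>M M)"
  shows "(\<lambda>c. ennreal (B q c / (W::real))) \<in> borel_measurable M"
proof -
  have qs: "q \<in> space lborel" by simp
  have "(\<lambda>c. B q c) \<in> borel_measurable M"
    using measurable_compose[OF measurable_Pair1'[OF qs] assms] by simp
  then have "(\<lambda>c. B q c / W) \<in> borel_measurable M"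
    by (rule borel_measurable_divide) simp
  then show ?thesis by (rule measurable_compose[OF _ measurable_ennreal])
qed

lemma pull_W:
  fixes W :: real
  assumes W0: "W > 0" and B0: "\<And>n m c. B n m c \<ge> 0"
    and Bm: "\<And>n m. (\<lambda>c. ennreal (B n m c / W)) \<in> borel_measurable (M n m)"
  shows "ennreal W * (\<Sum>n. \<Sum>m. \<integral>\<^sup>+c. ennreal (B n m c / W) \<partial>M n m) = (\<Sum>n. \<Sum>m. \<integral>\<^sup>+c. ennreal (B n m c) \<partial>M n m)"
proof -
  have e: "(\<integral>\<^sup>+c. ennreal (B n m c) \<partial>M n m) = ennreal W * (\<integral>\<^sup>+c. ennreal (B n m c / W) \<partial>M n m)" for n m
  proof -
    have "(\<integral>\<^sup>+c. ennreal (B n m c) \<partial>M n m) = (\<integral>\<^sup>+c. ennreal W * ennreal (B n m c / W) \<partial>M n m)"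
    proof (rule nn_integral_cong)
      fix c
      have "ennreal W * ennreal (B n m c / W) = ennreal (W * (B n m c / W))"
        by (rule ennreal_mult[symmetric]) (use W0 B0[of n m c] in auto)
      also have "W * (B n m c / W) = B n m c" using W0 by simp
      finally show "ennreal (B n m c) = ennreal W * ennreal (B n m c / W)" by simp
    qed
    also have "\<dots> = ennreal W * (\<integral>\<^sup>+c. ennreal (B n m c / W) \<partial>M n m)"
      by (rule nn_integral_cmult[OF Bm])
    finally show ?thesis .
  qed
  show ?thesis unfolding e by simp
qed

lemma perq_b:
  fixes Psi :: "'d::finite fock" and q :: "real^'d"
  assumes mb: "mb > 0" and z: "Re z < -1" and C: "C \<ge> 0" and C': "C' \<ge> 0" and d: "\<delta> \<ge> 0" and g: "\<gamma> \<ge> 0"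
    and s1: "1/2 \<le> \<gamma> + \<delta>" and s2: "\<gamma> + \<delta> \<le> 1"
    and Pm: "\<And>n m. Psi n m \<in> borel_measurable (fock_meas n m)"
  shows "ennreal (omega mb q * (omega mb q + \<bar>Re z\<bar>) powr (2 * (\<delta> + \<gamma>) - 1))
            * fock_norm2 (res_pow mb mf (z - complex_of_real (omega mb q) - complex_of_real C) \<delta>
                (ann_a (res_pow mb mf (z - complex_of_real C') \<gamma> Psi) q))
       \<le> (\<Sum>n. \<Sum>m. \<integral>\<^sup>+c. ennreal (Bb mb mf \<bar>Re z\<bar> Psi n m q c) \<partial>fock_meas n m)"
proof -
  define W where "W = omega mb q * (omega mb q + \<bar>Re z\<bar>) powr (2 * (\<delta> + \<gamma>) - 1)"
  define X where "X = res_pow mb mf (z - complex_of_real (omega mb q) - complex_of_real C) \<delta> (ann_a (res_pow mb mf (z - complex_of_real C') \<gamma> Psi) q)"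
  have w0: "omega mb q > 0" by (rule omega_pos[OF mb])
  have W0: "W > 0" unfolding W_def using w0 by simp
  have Bb0: "Bb mb mf \<bar>Re z\<bar> Psi n m q c \<ge> 0" for n m c
  proof -
    have "omega mb q + (\<Sum>i<n. omega mb (fst c i)) + (\<Sum>j<m. omega mf (snd c j)) + \<bar>Re z\<bar> > 0"
      using w0 by (intro add_pos_nonneg sum_nonneg) (auto simp: omega_nonneg)
    then show ?thesis unfolding Bb_def using w0 by simp
  qed
  have ptw: "(cmod (X n m c))\<^sup>2 \<le> Bb mb mf \<bar>Re z\<bar> Psi n m q c / W" for n m c
  proof -
    define E where "E = energy mb mf n m c"
    define P where "P = Psi (n + 1) m (ins n q (fst c), snd c)"
    have E0: "E \<ge> 0" unfolding E_def energy_def by (intro add_nonneg_nonneg sum_nonneg) (auto simp: omega_nonneg)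
    have en: "energy mb mf (n + 1) m (ins n q (fst c), snd c) = omega mb q + E"
      unfolding E_def using energy_ins_a[of mb mf n m q "fst c" "snd c"] by simp
    have Xe: "X n m c = (complex_of_real E - (z - complex_of_real (omega mb q) - complex_of_real C)) powr complex_of_real (- \<delta>) *
       (complex_of_real (sqrt (real (n + 1))) *
        ((complex_of_real (omega mb q + E) - (z - complex_of_real C')) powr complex_of_real (- \<gamma>) * P))"
      unfolding X_def res_pow_def ann_a_def en E_def[symmetric] P_def[symmetric] by (rule refl)
    have pw': "W * (cmod (X n m c))\<^sup>2 \<le> real (Suc n) * omega mb q / (omega mb q + E + \<bar>Re z\<bar>) * (cmod P)\<^sup>2"
      unfolding W_def Xe by (rule pw[OF E0 w0 z C C' d g s1 s2])
    have Bbe: "Bb mb mf \<bar>Re z\<bar> Psi n m q c = real (Suc n) * omega mb q / (omega mb q + E + \<bar>Re z\<bar>) * (cmod P)\<^sup>2"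
      unfolding Bb_def E_def P_def energy_def by (simp add: add.assoc)
    show ?thesis unfolding Bbe pos_le_divide_eq[OF W0] using pw' by (simp add: mult.commute[of _ W])
  qed
  have Bm: "(\<lambda>c. ennreal (Bb mb mf \<bar>Re z\<bar> Psi n m q c / W)) \<in> borel_measurable (fock_meas n m)" for n m
    by (rule B_meas_q[OF Bb_meas[where Psi=Psi and n=n and m=m and mb=mb and mf=mf and a="\<bar>Re z\<bar>", OF Pm]])
  have le1: "fock_norm2 X \<le> (\<Sum>n. \<Sum>m. \<integral>\<^sup>+c. ennreal (Bb mb mf \<bar>Re z\<bar> Psi n m q c / W) \<partial>fock_meas n m)"
    unfolding fock_norm2_def by (intro suminf_le summableI nn_integral_mono ennreal_leI ptw)
  have eq: "ennreal W * (\<Sum>n. \<Sum>m. \<integral>\<^sup>+c. ennreal (Bb mb mf \<bar>Re z\<bar> Psi n m q c / W) \<partial>fock_meas n m)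
      = (\<Sum>n. \<Sum>m. \<integral>\<^sup>+c. ennreal (Bb mb mf \<bar>Re z\<bar> Psi n m q c) \<partial>fock_meas n m)"
    by (rule pull_W[OF W0 Bb0 Bm])
  have "ennreal W * fock_norm2 X \<le> (\<Sum>n. \<Sum>m. \<integral>\<^sup>+c. ennreal (Bb mb mf \<bar>Re z\<bar> Psi n m q c) \<partial>fock_meas n m)"
    using mult_left_mono[OF le1, of "ennreal W"] eq by simp
  then show ?thesis unfolding W_def X_def .
qed

lemma perq_f:
  fixes Psi :: "'d::finite fock" and q :: "real^'d"
  assumes mf: "mf > 0" and z: "Re z < -1" and C: "C \<ge> 0" and C': "C' \<ge> 0" and d: "\<delta> \<ge> 0" and g: "\<gamma> \<ge> 0"
    and s1: "1/2 \<le> \<gamma> + \<delta>" and s2: "\<gamma> + \<delta> \<le> 1"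
    and Pm: "\<And>n m. Psi n m \<in> borel_measurable (fock_meas n m)"
  shows "ennreal (omega mf q * (omega mf q + \<bar>Re z\<bar>) powr (2 * (\<delta> + \<gamma>) - 1))
            * fock_norm2 (res_pow mb mf (z - complex_of_real (omega mf q) - complex_of_real C) \<delta>
                (ann_b (res_pow mb mf (z - complex_of_real C') \<gamma> Psi) q))
       \<le> (\<Sum>n. \<Sum>m. \<integral>\<^sup>+c. ennreal (Bf mb mf \<bar>Re z\<bar> Psi n m q c) \<partial>fock_meas n m)"
proof -
  define W where "W = omega mf q * (omega mf q + \<bar>Re z\<bar>) powr (2 * (\<delta> + \<gamma>) - 1)"
  define X where "X = res_pow mb mf (z - complex_of_real (omega mf q) - complex_of_real C) \<delta> (ann_b (res_pow mb mf (z - complex_of_real C') \<gamma> Psi) q)"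
  have w0: "omega mf q > 0" by (rule omega_pos[OF mf])
  have W0: "W > 0" unfolding W_def using w0 by simp
  have Bf0: "Bf mb mf \<bar>Re z\<bar> Psi n m q c \<ge> 0" for n m c
  proof -
    have "omega mf q + (\<Sum>j<m. omega mf (snd c j)) + (\<Sum>i<n. omega mb (fst c i)) + \<bar>Re z\<bar> > 0"
      using w0 by (intro add_pos_nonneg sum_nonneg) (auto simp: omega_nonneg)
    then show ?thesis unfolding Bf_def using w0 by simp
  qed
  have ptw: "(cmod (X n m c))\<^sup>2 \<le> Bf mb mf \<bar>Re z\<bar> Psi n m q c / W" for n m c
  proof -
    define E where "E = energy mb mf n m c"
    define P where "P = Psi n (m + 1) (fst c, ins m q (snd c))"
    have E0: "E \<ge> 0" unfolding E_def energy_def by (intro add_nonneg_nonneg sum_nonneg) (auto simp: omega_nonneg)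
    have en: "energy mb mf n (m + 1) (fst c, ins m q (snd c)) = omega mf q + E"
      unfolding E_def using energy_ins_b[of mb mf n m "fst c" q "snd c"] by simp
    have Xe: "X n m c = (complex_of_real E - (z - complex_of_real (omega mf q) - complex_of_real C)) powr complex_of_real (- \<delta>) *
       (complex_of_real (sqrt (real (m + 1))) *
        ((complex_of_real (omega mf q + E) - (z - complex_of_real C')) powr complex_of_real (- \<gamma>) * P))"
      unfolding X_def res_pow_def ann_b_def en E_def[symmetric] P_def[symmetric] by (rule refl)
    have pw': "W * (cmod (X n m c))\<^sup>2 \<le> real (Suc m) * omega mf q / (omega mf q + E + \<bar>Re z\<bar>) * (cmod P)\<^sup>2"
      unfolding W_def Xe by (rule pw[OF E0 w0 z C C' d g s1 s2])
    have Bfe: "Bf mb mf \<bar>Re z\<bar> Psi n m q c = real (Suc m) * omega mf q / (omega mf q + E + \<bar>Re z\<bar>) * (cmod P)\<^sup>2"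
      unfolding Bf_def E_def P_def energy_def by (simp add: ac_simps)
    show ?thesis unfolding Bfe pos_le_divide_eq[OF W0] using pw' by (simp add: mult.commute[of _ W])
  qed
  have Bm: "(\<lambda>c. ennreal (Bf mb mf \<bar>Re z\<bar> Psi n m q c / W)) \<in> borel_measurable (fock_meas n m)" for n m
    by (rule B_meas_q[OF Bf_meas[where Psi=Psi and n=n and m=m and mb=mb and mf=mf and a="\<bar>Re z\<bar>", OF Pm]])
  have le1: "fock_norm2 X \<le> (\<Sum>n. \<Sum>m. \<integral>\<^sup>+c. ennreal (Bf mb mf \<bar>Re z\<bar> Psi n m q c / W) \<partial>fock_meas n m)"
    unfolding fock_norm2_def by (intro suminf_le summableI nn_integral_mono ennreal_leI ptw)
  have eq: "ennreal W * (\<Sum>n. \<Sum>m. \<integral>\<^sup>+c. ennreal (Bf mb mf \<bar>Re z\<bar> Psi n m q c / W) \<partial>fock_meas n m)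
      = (\<Sum>n. \<Sum>m. \<integral>\<^sup>+c. ennreal (Bf mb mf \<bar>Re z\<bar> Psi n m q c) \<partial>fock_meas n m)"
    by (rule pull_W[OF W0 Bf0 Bm])
  have "ennreal W * fock_norm2 X \<le> (\<Sum>n. \<Sum>m. \<integral>\<^sup>+c. ennreal (Bf mb mf \<bar>Re z\<bar> Psi n m q c) \<partial>fock_meas n m)"
    using mult_left_mono[OF le1, of "ennreal W"] eq by simp
  then show ?thesis unfolding W_def X_def .
qed

theorem lemmaB3:
  fixes mb mf C C' \<delta> \<gamma> :: real and z :: complex and Psi :: "'d::finite fock"
  assumes "mb > 0" and "mf > 0" and "Re z < -1"
    and "C \<ge> 0" and "C' \<ge> 0" and "\<delta> \<ge> 0" and "\<gamma> \<ge> 0"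
    and "1/2 \<le> \<gamma> + \<delta>" and "\<gamma> + \<delta> \<le> 1"
    and "fock_vector Psi"
  shows "((\<integral>\<^sup>+ q. ennreal (omega mb q * (omega mb q + \<bar>Re z\<bar>) powr (2 * (\<delta> + \<gamma>) - 1))
            * fock_norm2 (res_pow mb mf (z - complex_of_real (omega mb q) - complex_of_real C) \<delta>
                (ann_a (res_pow mb mf (z - complex_of_real C') \<gamma> Psi) q)) \<partial>lborel)
          \<le> fock_norm2 Psi) \<and>
         ((\<integral>\<^sup>+ k. ennreal (omega mf k * (omega mf k + \<bar>Re z\<bar>) powr (2 * (\<delta> + \<gamma>) - 1))
            * fock_norm2 (res_pow mb mf (z - complex_of_real (omega mf k) - complex_of_real C) \<delta>
                (ann_b (res_pow mb mf (z - complex_of_real C') \<gamma> Psi) k)) \<partial>lborel)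
          \<le> fock_norm2 Psi)"
proof -
  note fv = assms(10)[unfolded fock_vector_def]
  have Pm: "\<And>n m. Psi n m \<in> borel_measurable (fock_meas n m)" using fv by blast
  have Ps: "\<And>n m x y \<sigma>. (x, y) \<in> space (fock_meas n m) \<Longrightarrow> \<sigma> permutes {..<n} \<Longrightarrow> Psi n m (x \<circ> \<sigma>, y) = Psi n m (x, y)"
    using fv by blast
  have Pa: "\<And>n m x y \<sigma>. (x, y) \<in> space (fock_meas n m) \<Longrightarrow> \<sigma> permutes {..<m} \<Longrightarrow> Psi n m (x, y \<circ> \<sigma>) = of_int (sign \<sigma>) * Psi n m (x, y)"
    using fv by blast
  have a0: "\<bar>Re z\<bar> > 0" using assms(3) by simp
  define F where "F n m = (\<integral>\<^sup>+c. ennreal ((cmod (Psi n m c))\<^sup>2) \<partial>fock_meas n m)" for n m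
  have fn: "fock_norm2 Psi = (\<Sum>n. \<Sum>m. F n m)" unfolding fock_norm2_def F_def ..
  have mbm: "(\<lambda>q. \<integral>\<^sup>+c. ennreal (Bb mb mf \<bar>Re z\<bar> Psi n m q c) \<partial>fock_meas n m) \<in> borel_measurable lborel" for n m
    using sigma_finite_measure.borel_measurable_nn_integral_fst[OF sf_fock measurable_compose[OF Bb_meas[where Psi=Psi and n=n and m=m and mb=mb and mf=mf and a="\<bar>Re z\<bar>", OF Pm] measurable_ennreal]]
    by simp
  have mbs: "(\<lambda>q. \<Sum>m. \<integral>\<^sup>+c. ennreal (Bb mb mf \<bar>Re z\<bar> Psi n m q c) \<partial>fock_meas n m) \<in> borel_measurable lborel" for n
    by (rule borel_measurable_suminf_order[OF mbm])
  have mfm: "(\<lambda>q. \<integral>\<^sup>+c. ennreal (Bf mb mf \<bar>Re z\<bar> Psi n m q c) \<partial>fock_meas n m) \<in> borel_measurable lborel" for n m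
    using sigma_finite_measure.borel_measurable_nn_integral_fst[OF sf_fock measurable_compose[OF Bf_meas[where Psi=Psi and n=n and m=m and mb=mb and mf=mf and a="\<bar>Re z\<bar>", OF Pm] measurable_ennreal]]
    by simp
  have mfs: "(\<lambda>q. \<Sum>m. \<integral>\<^sup>+c. ennreal (Bf mb mf \<bar>Re z\<bar> Psi n m q c) \<partial>fock_meas n m) \<in> borel_measurable lborel" for n
    by (rule borel_measurable_suminf_order[OF mfm])
  have B: "(\<integral>\<^sup>+ q. ennreal (omega mb q * (omega mb q + \<bar>Re z\<bar>) powr (2 * (\<delta> + \<gamma>) - 1))
            * fock_norm2 (res_pow mb mf (z - complex_of_real (omega mb q) - complex_of_real C) \<delta>
                (ann_a (res_pow mb mf (z - complex_of_real C') \<gamma> Psi) q)) \<partial>lborel)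
          \<le> (\<integral>\<^sup>+ q. (\<Sum>n. \<Sum>m. \<integral>\<^sup>+c. ennreal (Bb mb mf \<bar>Re z\<bar> Psi n m q c) \<partial>fock_meas n m) \<partial>lborel)"
    by (rule nn_integral_mono) (rule perq_b[OF assms(1,3-9) Pm])
  also have "\<dots> = (\<Sum>n. \<integral>\<^sup>+ q. (\<Sum>m. \<integral>\<^sup>+c. ennreal (Bb mb mf \<bar>Re z\<bar> Psi n m q c) \<partial>fock_meas n m) \<partial>lborel)"
    by (rule nn_integral_suminf[OF mbs])
  also have "\<dots> = (\<Sum>n. \<Sum>m. \<integral>\<^sup>+ q. \<integral>\<^sup>+c. ennreal (Bb mb mf \<bar>Re z\<bar> Psi n m q c) \<partial>fock_meas n m \<partial>lborel)"
    by (rule suminf_cong) (rule nn_integral_suminf[OF mbm])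
  also have "\<dots> \<le> (\<Sum>n. \<Sum>m. F (Suc n) m)"
  proof -
    have bs: "(\<integral>\<^sup>+ q. \<integral>\<^sup>+c. ennreal (Bb mb mf \<bar>Re z\<bar> Psi n m q c) \<partial>fock_meas n m \<partial>lborel) \<le> F (Suc n) m" for n m
      unfolding F_def by (rule boson_sector[where Psi=Psi and n=n and m=m and mb=mb and mf=mf and a="\<bar>Re z\<bar>", OF a0 assms(1) Pm[of "Suc n" m] Ps[where n="Suc n" and m=m]])
    show ?thesis by (intro suminf_le summableI bs)
  qed
  also have "\<dots> \<le> (\<Sum>n. \<Sum>m. F n m)" by (rule suminf_shift_le)
  finally have BB: "(\<integral>\<^sup>+ q. ennreal (omega mb q * (omega mb q + \<bar>Re z\<bar>) powr (2 * (\<delta> + \<gamma>) - 1))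
            * fock_norm2 (res_pow mb mf (z - complex_of_real (omega mb q) - complex_of_real C) \<delta>
                (ann_a (res_pow mb mf (z - complex_of_real C') \<gamma> Psi) q)) \<partial>lborel) \<le> fock_norm2 Psi"
    unfolding fn .
  have "(\<integral>\<^sup>+ k. ennreal (omega mf k * (omega mf k + \<bar>Re z\<bar>) powr (2 * (\<delta> + \<gamma>) - 1))
            * fock_norm2 (res_pow mb mf (z - complex_of_real (omega mf k) - complex_of_real C) \<delta>
                (ann_b (res_pow mb mf (z - complex_of_real C') \<gamma> Psi) k)) \<partial>lborel)
          \<le> (\<integral>\<^sup>+ q. (\<Sum>n. \<Sum>m. \<integral>\<^sup>+c. ennreal (Bf mb mf \<bar>Re z\<bar> Psi n m q c) \<partial>fock_meas n m) \<partial>lborel)"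
    by (rule nn_integral_mono) (rule perq_f[OF assms(2,3-9) Pm])
  also have "\<dots> = (\<Sum>n. \<integral>\<^sup>+ q. (\<Sum>m. \<integral>\<^sup>+c. ennreal (Bf mb mf \<bar>Re z\<bar> Psi n m q c) \<partial>fock_meas n m) \<partial>lborel)"
    by (rule nn_integral_suminf[OF mfs])
  also have "\<dots> = (\<Sum>n. \<Sum>m. \<integral>\<^sup>+ q. \<integral>\<^sup>+c. ennreal (Bf mb mf \<bar>Re z\<bar> Psi n m q c) \<partial>fock_meas n m \<partial>lborel)"
    by (rule suminf_cong) (rule nn_integral_suminf[OF mfm])
  also have "\<dots> \<le> (\<Sum>n. \<Sum>m. F n (Suc m))"
  proof -
    have bs: "(\<integral>\<^sup>+ q. \<integral>\<^sup>+c. ennreal (Bf mb mf \<bar>Re z\<bar> Psi n m q c) \<partial>fock_meas n m \<partial>lborel) \<le> F n (Suc m)" for n m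
      unfolding F_def by (rule fermion_sector[where Psi=Psi and n=n and m=m and mb=mb and mf=mf and a="\<bar>Re z\<bar>", OF a0 assms(2) Pm[of n "Suc m"] Pa[where n=n and m="Suc m"]])
    show ?thesis by (intro suminf_le summableI bs)
  qed
  also have "\<dots> \<le> (\<Sum>n. \<Sum>m. F n m)" by (intro suminf_le summableI suminf_shift_le)
  finally have FF: "(\<integral>\<^sup>+ k. ennreal (omega mf k * (omega mf k + \<bar>Re z\<bar>) powr (2 * (\<delta> + \<gamma>) - 1))
            * fock_norm2 (res_pow mb mf (z - complex_of_real (omega mf k) - complex_of_real C) \<delta>
                (ann_b (res_pow mb mf (z - complex_of_real C') \<gamma> Psi) k)) \<partial>lborel) \<le> fock_norm2 Psi"
    unfolding fn .
  show ?thesis using BB FF by blast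
qed


end
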